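(* Let $(X,d)$ be an $n$-point metric space ($n\ge2$) with aspect ratio $\alpha=\mathrm{diam}(X)/\mathrm{sep}(X)$, where $\mathrm{diam}(X)=\max_{x,y}d(x,y)$ and $\mathrm{sep}(X)=\min_{x\ne y}d(x,y)$. Then for every $0<\varepsilon<1$ and every integer $k\ge(n+\frac32)(\frac{\alpha}{\varepsilon}+\mathrm{diam}(X)+1)$, $(X,d)$ embeds with distortion at most $(1-\varepsilon)^{-1}$ into $([\mathbb{N}]^k,d^{(k)}_{\mathrm{I}})$; that is, there are $s>0$ and $f:X\to[\mathbb{N}]^k$ with $s\,d(x,y)\le d^{(k)}_{\mathrm{I}}(f(x),f(y))\le s(1-\varepsilon)^{-1}d(x,y)$ for all $x,y\in X$. In particular, for every finite metric space $X$ and every $\varepsilon>0$ there is $k\in\mathbb{N}$ such that $X$ embeds into $([\mathbb{N}]^k,d^{(k)}_{\mathrm{I}})$ (hence into $([\mathbb{N}]^{<\omega},d_{\mathrm{I}})$) with distortion at most $1+\varepsilon$.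
   Context: For $k\in\mathbb{N}$, $[\mathbb{N}]^k$ is the set of $k$-element subsets of $\mathbb{N}$ written increasingly. In Kalton's interlacing graph on $[\mathbb{N}]^k$, $A=\{a_1<\dots<a_k\}\ne B=\{b_1<\dots<b_k\}$ are adjacent iff either $a_i\le b_i\le a_{i+1}$ ($1\le i<k$) and $a_k\le b_k$, or $b_i\le a_i\le b_{i+1}$ ($1\le i<k$) and $b_k\le a_k$; $d^{(k)}_{\mathrm{I}}$ is the graph metric. $([\mathbb{N}]^{<\omega},d_{\mathrm{I}})$ is the universal interlacing graph on all finite subsets, in which additionally sets whose cardinalities differ by one are adjacent when they interlace ($\{a_1<\dots<a_{m+1}\}$ and $\{b_1<\dots<b_m\}$ with $a_i\le b_i\le a_{i+1}$), and $\emptyset$ is adjacent to all singletons; $d_{\mathrm{I}}$ restricted to $[\mathbb{N}]^k$ equals $d^{(k)}_{\mathrm{I}}$. *)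

theory Defs
  imports Complex_Main
begin

text \<open>Positive integers (the paper's natural numbers).\<close>
definition Npos :: "nat set" where
  "Npos = {n. 1 \<le> n}"

definition kSets :: "nat \<Rightarrow> nat set set" where
  "kSets k = {A. A \<subseteq> Npos \<and> finite A \<and> card A = k}"

definition interl :: "nat \<Rightarrow> nat set \<Rightarrow> nat set \<Rightarrow> bool" where
  "interl k A B =
    (let a = sorted_list_of_set A; b = sorted_list_of_set B in
      (\<forall>i. i + 1 < k \<longrightarrow> a ! i \<le> b ! i \<and> b ! i \<le> a ! (i + 1)) \<and>
      a ! (k - 1) \<le> b ! (k - 1))"

definition adjI :: "nat \<Rightarrow> nat set \<Rightarrow> nat set \<Rightarrow> bool" where
  "adjI k A B = (A \<in> kSets k \<and> B \<in> kSets k \<and> A \<noteq> B \<and> (interl k A B \<or> interl k B A))"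

inductive walkI :: "nat \<Rightarrow> nat \<Rightarrow> nat set \<Rightarrow> nat set \<Rightarrow> bool" for k where
  refl: "A \<in> kSets k \<Longrightarrow> walkI k 0 A A"
| step: "adjI k A B \<Longrightarrow> walkI k n B C \<Longrightarrow> walkI k (Suc n) A C"

text \<open>The graph metric d_I^(k) (the graph is connected, so LEAST is attained).\<close>
definition dI :: "nat \<Rightarrow> nat set \<Rightarrow> nat set \<Rightarrow> nat" where
  "dI k A B = (LEAST n. walkI k n A B)"

definition is_metric_on :: "'a set \<Rightarrow> ('a \<Rightarrow> 'a \<Rightarrow> real) \<Rightarrow> bool" where
  "is_metric_on X d =
    ((\<forall>x\<in>X. \<forall>y\<in>X. 0 \<le> d x y \<and> (d x y = 0 \<longleftrightarrow> x = y) \<and> d x y = d y x) \<and>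
     (\<forall>x\<in>X. \<forall>y\<in>X. \<forall>z\<in>X. d x z \<le> d x y + d y z))"

definition diam :: "'a set \<Rightarrow> ('a \<Rightarrow> 'a \<Rightarrow> real) \<Rightarrow> real" where
  "diam X d = Max {d x y | x y. x \<in> X \<and> y \<in> X}"

definition sep :: "'a set \<Rightarrow> ('a \<Rightarrow> 'a \<Rightarrow> real) \<Rightarrow> real" where
  "sep X d = Min {d x y | x y. x \<in> X \<and> y \<in> X \<and> x \<noteq> y}"

end

theory Submission
  imports Defs
begin

definition cnt :: "nat set \<Rightarrow> nat \<Rightarrow> nat" where
  "cnt A t = card {a\<in>A. a \<le> t}"

lemma sorted_nth_le_iff:
  assumes "sorted_wrt (<) xs" "i < length xs"
  shows "xs!i \<le> t \<longleftrightarrow> i < length (filter (\<lambda>x. x \<le> (t::nat)) xs)"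
  using assms
proof (induction xs arbitrary: i)
  case Nil then show ?case by simp
next
  case (Cons x ys)
  show ?case
  proof (cases "x \<le> t")
    case True
    then show ?thesis using Cons by (cases i) auto
  next
    case False
    then have e: "filter (\<lambda>x. x \<le> t) ys = []" using Cons.prems(1)
      by (auto simp: filter_empty_conv)
    have "(x#ys)!i \<ge> x" using Cons.prems by (cases i) (auto simp: less_imp_le)
    then show ?thesis using False e by auto
  qed
qed

lemma cnt_le: "A \<in> kSets k \<Longrightarrow> cnt A t \<le> k"
  unfolding cnt_def kSets_def by (auto intro!: card_mono[of A, THEN le_trans])

lemma kset_nth_le_iff:
  assumes "A \<in> kSets k" "i < k"
  shows "sorted_list_of_set A ! i \<le> t \<longleftrightarrow> i < cnt A t"
proof -
  let ?a = "sorted_list_of_set A"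
  have fin: "finite A" and c: "card A = k" using assms by (auto simp: kSets_def)
  have s: "sorted_wrt (<) ?a" by simp
  have l: "length ?a = k" using c by simp
  have "length (filter (\<lambda>x. x \<le> t) ?a) = cnt A t"
    using distinct_length_filter[of ?a "\<lambda>x. x \<le> t"] fin unfolding cnt_def
    by (simp add: Collect_conj_eq Int_commute)
  then show ?thesis using sorted_nth_le_iff[OF s, of i t] l assms by simp
qed

lemma interl_cnt:
  assumes A: "A \<in> kSets k" and B: "B \<in> kSets k" and I: "interl k A B" and k: "0 < k"
  shows "cnt B t \<le> cnt A t \<and> cnt A t \<le> cnt B t + 1"
proof -
  let ?a = "sorted_list_of_set A" and ?b = "sorted_list_of_set B"
  have ab: "?a!i \<le> ?b!i" if "i < k" for i
  proof (cases "i + 1 < k")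
    case True then show ?thesis using I unfolding interl_def Let_def by blast
  next
    case False then have "i = k - 1" using that by auto
    then show ?thesis using I unfolding interl_def Let_def by blast
  qed
  have ba: "?b!i \<le> ?a!(i+1)" if "i + 1 < k" for i
    using I that unfolding interl_def Let_def by blast
  have 1: "cnt B t \<le> cnt A t"
  proof (rule ccontr)
    assume "\<not> ?thesis"
    then have lt: "cnt A t < cnt B t" by simp
    let ?i = "cnt A t"
    have ik: "?i < k" using lt cnt_le[OF B, of t] by simp
    have "?b!?i \<le> t" using kset_nth_le_iff[OF B ik] lt by simp
    then have "?a!?i \<le> t" using ab[OF ik] by simp
    then show False using kset_nth_le_iff[OF A ik] by simp
  qed
  have 2: "cnt A t \<le> cnt B t + 1"
  proof (rule ccontr)
    assume "\<not> ?thesis"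
    then have lt: "cnt B t + 1 < cnt A t" by simp
    let ?i = "cnt B t"
    have ik: "?i + 1 < k" using lt cnt_le[OF A, of t] by simp
    have "?a!(?i+1) \<le> t" using kset_nth_le_iff[OF A ik] lt by simp
    then have "?b!?i \<le> t" using ba[OF ik] by simp
    then show False using kset_nth_le_iff[OF B, of ?i t] ik by simp
  qed
  show ?thesis using 1 2 by simp
qed

lemma cnt_interl:
  assumes A: "A \<in> kSets k" and B: "B \<in> kSets k" and k: "0 < k"
    and h1: "\<forall>t. cnt B t \<le> cnt A t" and h2: "\<forall>t. cnt A t \<le> cnt B t + 1"
  shows "interl k A B"
proof -
  let ?a = "sorted_list_of_set A" and ?b = "sorted_list_of_set B"
  have ab: "?a!i \<le> ?b!i" if "i < k" for i
  proof -
    have "i < cnt B (?b!i)" using kset_nth_le_iff[OF B that, of "?b!i"] by simp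
    then have "i < cnt A (?b!i)" using h1 by (meson order_less_le_trans)
    then show ?thesis using kset_nth_le_iff[OF A that] by simp
  qed
  have ba: "?b!i \<le> ?a!(i+1)" if "i + 1 < k" for i
  proof -
    have "i + 1 < cnt A (?a!(i+1))" using kset_nth_le_iff[OF A that, of "?a!(i+1)"] by simp
    then have "i < cnt B (?a!(i+1))" using h2 by (metis add_less_cancel_right order_less_le_trans)
    then show ?thesis using kset_nth_le_iff[OF B, of i] that by simp
  qed
  show ?thesis unfolding interl_def Let_def using ab ba k by auto
qed

lemma adj_sym: "adjI k A B \<Longrightarrow> adjI k B A"
  unfolding adjI_def by auto

lemma walk_lower:
  assumes "walkI k n A B" "0 < k"
  shows "\<bar>(int (cnt B t2) - int (cnt B t1)) - (int (cnt A t2) - int (cnt A t1))\<bar> \<le> int n"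
  using assms
proof (induction rule: walkI.induct)
  case (refl A) then show ?case by simp
next
  case (step A B n C)
  have "\<bar>(int (cnt B t2) - int (cnt B t1)) - (int (cnt A t2) - int (cnt A t1))\<bar> \<le> 1"
  proof -
    have AB: "A \<in> kSets k" "B \<in> kSets k" and I: "interl k A B \<or> interl k B A"
      using step.hyps(1) unfolding adjI_def by auto
    from I show ?thesis
    proof
      assume "interl k A B"
      then have "\<And>t. cnt B t \<le> cnt A t \<and> cnt A t \<le> cnt B t + 1"
        using interl_cnt AB step.prems by blast
      then show ?thesis
        by (smt (verit, best) of_nat_1 of_nat_add of_nat_mono)
    next
      assume "interl k B A"
      then have "\<And>t. cnt A t \<le> cnt B t \<and> cnt B t \<le> cnt A t + 1"
        using interl_cnt AB step.prems by blast
      then show ?thesis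
        by (smt (verit, best) of_nat_1 of_nat_add of_nat_mono)
    qed
  qed
  then show ?case using step.IH step.prems by simp
qed

lemma walk_append: "walkI k n A B \<Longrightarrow> walkI k m B C \<Longrightarrow> walkI k (n+m) A C"
  by (induction rule: walkI.induct) (auto intro: walkI.step)

definition valid :: "nat \<Rightarrow> (nat \<Rightarrow> nat) \<Rightarrow> bool" where
  "valid k G \<longleftrightarrow> G 0 = 0 \<and> (\<forall>t. G t \<le> G (Suc t) \<and> G (Suc t) \<le> Suc (G t)) \<and> (\<exists>T. \<forall>t\<ge>T. G t = k)"

definition SetG :: "(nat \<Rightarrow> nat) \<Rightarrow> nat set" where
  "SetG G = {Suc t | t. G (Suc t) = Suc (G t)}"

lemma cnt_SetG:
  assumes "valid k G" shows "cnt (SetG G) t = G t"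
proof (induction t)
  case 0
  have "{a \<in> SetG G. a \<le> 0} = {}" by (auto simp: SetG_def)
  then show ?case using assms by (simp add: cnt_def valid_def)
next
  case (Suc t)
  have eq: "{a \<in> SetG G. a \<le> Suc t} = {a \<in> SetG G. a \<le> t} \<union> (if G (Suc t) = Suc (G t) then {Suc t} else {})"
    by (auto simp: SetG_def le_Suc_eq)
  have fin: "finite {a \<in> SetG G. a \<le> t}" by (rule finite_subset[of _ "{..t}"]) auto
  have nin: "Suc t \<notin> {a \<in> SetG G. a \<le> t}" by auto
  have st: "G (Suc t) = G t \<or> G (Suc t) = Suc (G t)" using assms unfolding valid_def
    by (metis le_SucE le_antisym)
  show ?case using Suc.IH st unfolding cnt_def eq using fin nin by auto
qed

lemma SetG_kSets:
  assumes v: "valid k G" shows "SetG G \<in> kSets k"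
proof -
  obtain T where T: "\<forall>t\<ge>T. G t = k" using v unfolding valid_def by blast
  have sub: "SetG G \<subseteq> {..T}"
  proof
    fix a assume "a \<in> SetG G"
    then obtain t where a: "a = Suc t" "G (Suc t) = Suc (G t)" by (auto simp: SetG_def)
    have "t < T"
    proof (rule ccontr)
      assume "\<not> t < T" then have "G t = k" "G (Suc t) = k" using T by auto
      then show False using a by simp
    qed
    then show "a \<in> {..T}" using a by simp
  qed
  then have fin: "finite (SetG G)" by (rule finite_subset) simp
  have "{a \<in> SetG G. a \<le> T} = SetG G" using sub by auto
  then have "card (SetG G) = G T" using cnt_SetG[OF v, of T] unfolding cnt_def by simp
  then have "card (SetG G) = k" using T by simp
  moreover have "SetG G \<subseteq> Npos" by (auto simp: SetG_def Npos_def)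
  ultimately show ?thesis using fin by (simp add: kSets_def)
qed

lemma step_adj:
  assumes v: "valid k G" "valid k G'" and k: "0 < k"
    and le: "\<forall>t. G' t \<le> G t \<and> G t \<le> G' t + 1" and ne: "G \<noteq> G'"
  shows "adjI k (SetG G) (SetG G')"
proof -
  have A: "SetG G \<in> kSets k" "SetG G' \<in> kSets k" using SetG_kSets v by auto
  have "interl k (SetG G) (SetG G')"
    using cnt_interl[OF A k] le cnt_SetG[OF v(1)] cnt_SetG[OF v(2)] by simp
  moreover have "SetG G \<noteq> SetG G'"
  proof
    assume "SetG G = SetG G'"
    then have "\<And>t. G t = G' t" using cnt_SetG[OF v(1)] cnt_SetG[OF v(2)] by metis
    then show False using ne by auto
  qed
  ultimately show ?thesis using A by (simp add: adjI_def)
qed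

lemma valid_maxdec:
  assumes "valid k G" "valid k H" "\<forall>t. H t \<le> G t"
  shows "valid k (\<lambda>t. max (G t - 1) (H t))"
proof -
  obtain T1 where T1: "\<forall>t\<ge>T1. G t = k" using assms(1) unfolding valid_def by blast
  obtain T2 where T2: "\<forall>t\<ge>T2. H t = k" using assms(2) unfolding valid_def by blast
  have "\<forall>t\<ge>max T1 T2. max (G t - 1) (H t) = k" using T1 T2 by auto
  moreover have "\<forall>t. max (G t - 1) (H t) \<le> max (G (Suc t) - 1) (H (Suc t)) \<and>
      max (G (Suc t) - 1) (H (Suc t)) \<le> Suc (max (G t - 1) (H t))"
  proof
    fix t
    have "G t \<le> G (Suc t) \<and> G (Suc t) \<le> Suc (G t)" "H t \<le> H (Suc t) \<and> H (Suc t) \<le> Suc (H t)"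
      using assms(1,2) unfolding valid_def by blast+
    then show "max (G t - 1) (H t) \<le> max (G (Suc t) - 1) (H (Suc t)) \<and>
      max (G (Suc t) - 1) (H (Suc t)) \<le> Suc (max (G t - 1) (H t))"
      using spec[OF assms(3), of t] spec[OF assms(3), of "Suc t"] by (auto simp: max_def min_def)
  qed
  moreover have "max (G 0 - 1) (H 0) = 0" using assms unfolding valid_def by simp
  ultimately show ?thesis unfolding valid_def by blast
qed

lemma valid_mininc:
  assumes "valid k G" "valid k H" "\<forall>t. G t \<le> H t"
  shows "valid k (\<lambda>t. min (G t + 1) (H t))"
proof -
  obtain T1 where T1: "\<forall>t\<ge>T1. G t = k" using assms(1) unfolding valid_def by blast
  obtain T2 where T2: "\<forall>t\<ge>T2. H t = k" using assms(2) unfolding valid_def by blast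
  have "\<forall>t\<ge>max T1 T2. min (G t + 1) (H t) = k" using T1 T2 by auto
  moreover have "\<forall>t. min (G t + 1) (H t) \<le> min (G (Suc t) + 1) (H (Suc t)) \<and>
      min (G (Suc t) + 1) (H (Suc t)) \<le> Suc (min (G t + 1) (H t))"
  proof
    fix t
    have "G t \<le> G (Suc t) \<and> G (Suc t) \<le> Suc (G t)" "H t \<le> H (Suc t) \<and> H (Suc t) \<le> Suc (H t)"
      using assms(1,2) unfolding valid_def by blast+
    then show "min (G t + 1) (H t) \<le> min (G (Suc t) + 1) (H (Suc t)) \<and>
      min (G (Suc t) + 1) (H (Suc t)) \<le> Suc (min (G t + 1) (H t))"
      using spec[OF assms(3), of t] spec[OF assms(3), of "Suc t"] by (auto simp: max_def min_def)
  qed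
  moreover have "min (G 0 + 1) (H 0) = 0" using assms unfolding valid_def by simp
  ultimately show ?thesis unfolding valid_def by blast
qed

lemma valid_min:
  assumes "valid k G" "valid k H"
  shows "valid k (\<lambda>t. min (G t) (H t))"
proof -
  obtain T1 where T1: "\<forall>t\<ge>T1. G t = k" using assms(1) unfolding valid_def by blast
  obtain T2 where T2: "\<forall>t\<ge>T2. H t = k" using assms(2) unfolding valid_def by blast
  have "\<forall>t\<ge>max T1 T2. min (G t) (H t) = k" using T1 T2 by auto
  moreover have "\<forall>t. min (G t) (H t) \<le> min (G (Suc t)) (H (Suc t)) \<and>
      min (G (Suc t)) (H (Suc t)) \<le> Suc (min (G t) (H t))"
  proof
    fix t
    have "G t \<le> G (Suc t) \<and> G (Suc t) \<le> Suc (G t)" "H t \<le> H (Suc t) \<and> H (Suc t) \<le> Suc (H t)"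
      using assms(1,2) unfolding valid_def by blast+
    then show "min (G t) (H t) \<le> min (G (Suc t)) (H (Suc t)) \<and>
      min (G (Suc t)) (H (Suc t)) \<le> Suc (min (G t) (H t))"
      by (auto simp: max_def min_def)
  qed
  moreover have "min (G 0) (H 0) = 0" using assms unfolding valid_def by simp
  ultimately show ?thesis unfolding valid_def by blast
qed

lemma descent:
  assumes k: "0 < k"
  shows "valid k G \<Longrightarrow> valid k H \<Longrightarrow> (\<forall>t. H t \<le> G t \<and> G t \<le> H t + P)
    \<Longrightarrow> \<exists>n\<le>P. walkI k n (SetG G) (SetG H)"
proof (induction P arbitrary: G)
  case 0
  then have "G = H" by (intro ext) (simp add: le_antisym)
  then show ?case using SetG_kSets[OF "0.prems"(1)] walkI.refl by auto
next
  case (Suc P)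
  define G' where "G' = (\<lambda>t. max (G t - 1) (H t))"
  have v': "valid k G'" unfolding G'_def using valid_maxdec Suc.prems by blast
  have "\<forall>t. H t \<le> G' t \<and> G' t \<le> H t + P" unfolding G'_def
  proof
    fix t show "H t \<le> max (G t - 1) (H t) \<and> max (G t - 1) (H t) \<le> H t + P"
      using spec[OF Suc.prems(3), of t] by auto
  qed
  then obtain n where n: "n \<le> P" "walkI k n (SetG G') (SetG H)" using Suc.IH v' Suc.prems by blast
  show ?case
  proof (cases "G = G'")
    case True then show ?thesis using n by (intro exI[of _ n]) auto
  next
    case False
    have "\<forall>t. G' t \<le> G t \<and> G t \<le> G' t + 1" unfolding G'_def using Suc.prems(3) by auto
    then have "adjI k (SetG G) (SetG G')" using step_adj[OF Suc.prems(1) v' k] False by blast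
    then show ?thesis using n walkI.step by (intro exI[of _ "Suc n"]) auto
  qed
qed

lemma ascent:
  assumes k: "0 < k"
  shows "valid k G \<Longrightarrow> valid k H \<Longrightarrow> (\<forall>t. G t \<le> H t \<and> H t \<le> G t + P)
    \<Longrightarrow> \<exists>n\<le>P. walkI k n (SetG G) (SetG H)"
proof (induction P arbitrary: G)
  case 0
  then have "G = H" by (intro ext) (simp add: le_antisym)
  then show ?case using SetG_kSets[OF "0.prems"(1)] walkI.refl by auto
next
  case (Suc P)
  define G' where "G' = (\<lambda>t. min (G t + 1) (H t))"
  have v': "valid k G'" unfolding G'_def using valid_mininc Suc.prems by blast
  have "\<forall>t. G' t \<le> H t \<and> H t \<le> G' t + P" unfolding G'_def
  proof
    fix t show "min (G t + 1) (H t) \<le> H t \<and> H t \<le> min (G t + 1) (H t) + P"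
      using spec[OF Suc.prems(3), of t] by auto
  qed
  then obtain n where n: "n \<le> P" "walkI k n (SetG G') (SetG H)" using Suc.IH v' Suc.prems by blast
  show ?case
  proof (cases "G = G'")
    case True then show ?thesis using n by (intro exI[of _ n]) auto
  next
    case False
    have "\<forall>t. G t \<le> G' t \<and> G' t \<le> G t + 1" unfolding G'_def using Suc.prems(3) by auto
    then have "adjI k (SetG G') (SetG G)" using step_adj[OF v' Suc.prems(1) k] False by metis
    then have "adjI k (SetG G) (SetG G')" by (rule adj_sym)
    then show ?thesis using n walkI.step by (intro exI[of _ "Suc n"]) auto
  qed
qed

lemma walk_between:
  assumes k: "0 < k" and v: "valid k G" "valid k H"
    and b1: "\<forall>t. G t \<le> H t + P" and b2: "\<forall>t. H t \<le> G t + P"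
  shows "\<exists>n\<le>2*P. walkI k n (SetG G) (SetG H)"
proof -
  define m where "m = (\<lambda>t. min (G t) (H t))"
  have vm: "valid k m" unfolding m_def using valid_min v by blast
  have "\<forall>t. m t \<le> G t \<and> G t \<le> m t + P" unfolding m_def using b1 by (simp add: min_def)
  then obtain n1 where n1: "n1 \<le> P" "walkI k n1 (SetG G) (SetG m)"
    using descent[OF k v(1) vm, of P] by blast
  have "\<forall>t. m t \<le> H t \<and> H t \<le> m t + P" unfolding m_def using b2 by (simp add: min_def)
  then obtain n2 where n2: "n2 \<le> P" "walkI k n2 (SetG m) (SetG H)"
    using ascent[OF k vm v(2), of P] by blast
  show ?thesis using walk_append[OF n1(2) n2(2)] n1(1) n2(1) by (intro exI[of _ "n1+n2"]) auto
qed

definition ramp :: "nat \<Rightarrow> (nat \<Rightarrow> nat) \<Rightarrow> nat \<Rightarrow> nat" where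
  "ramp k H t = min (H (t div Suc k) + t mod Suc k) (H (t div Suc k + 1))"

lemma ramp_at: "ramp k H (i * Suc k) = min (H i) (H (i+1))"
proof -
  have a: "i * Suc k div Suc k = i" by (rule nonzero_mult_div_cancel_right) simp
  have b: "i * Suc k mod Suc k = 0" by (rule mod_mult_self2_is_0)
  show ?thesis unfolding ramp_def a b by simp
qed

lemma ramp_cmp:
  assumes "\<forall>i. H1 i \<le> H2 i + P" shows "ramp k H1 t \<le> ramp k H2 t + P"
  unfolding ramp_def using assms[rule_format, of "t div Suc k"] assms[rule_format, of "t div Suc k + 1"]
  by (simp add: min_def)

lemma valid_ramp:
  assumes mono: "\<forall>i. H i \<le> H (Suc i)" and bound: "\<forall>i. H i \<le> k" and H0: "H 0 = 0"
    and ev: "\<forall>i\<ge>N. H i = k"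
  shows "valid k (ramp k H)"
proof -
  have z: "ramp k H 0 = 0" unfolding ramp_def using H0 by simp
  have st: "ramp k H t \<le> ramp k H (Suc t) \<and> ramp k H (Suc t) \<le> Suc (ramp k H t)" for t
  proof (cases "Suc (t mod Suc k) = Suc k")
    case True
    then have a: "Suc t div Suc k = t div Suc k + 1" "Suc t mod Suc k = 0" "t mod Suc k = k"
      using div_Suc[of t "Suc k"] mod_Suc[of t "Suc k"] by auto
    have "H (t div Suc k + 1) \<le> H (t div Suc k) + t mod Suc k" using a bound
      by (metis trans_le_add2)
    then have "ramp k H t = H (t div Suc k + 1)" unfolding ramp_def by (rule min_absorb2)
    moreover have "ramp k H (Suc t) = H (t div Suc k + 1)" unfolding ramp_def a
      using mono by (simp add: min_absorb1)
    ultimately show ?thesis by simp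
  next
    case False
    then have a: "Suc t div Suc k = t div Suc k" "Suc t mod Suc k = Suc (t mod Suc k)"
      using div_Suc[of t "Suc k"] mod_Suc[of t "Suc k"] by auto
    show ?thesis unfolding ramp_def a by (simp add: min_def)
  qed
  have "\<forall>t\<ge>N * Suc k. ramp k H t = k"
  proof (intro allI impI)
    fix t assume "N * Suc k \<le> t"
    then have "N \<le> t div Suc k" by (simp add: less_eq_div_iff_mult_less_eq)
    then show "ramp k H t = k" unfolding ramp_def using ev by simp
  qed
  then show ?thesis unfolding valid_def using z st by blast
qed

theorem theorem5p3:
  fixes X :: "'a set" and d :: "'a \<Rightarrow> 'a \<Rightarrow> real" and n k :: nat and \<epsilon> :: real
  assumes "finite X" and "card X = n" and "n \<ge> 2"
    and "is_metric_on X d"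
    and "0 < \<epsilon>" and "\<epsilon> < 1"
    and "real k \<ge> (real n + 3/2) * ((diam X d / sep X d) / \<epsilon> + diam X d + 1)"
  shows "\<exists>s>0. \<exists>f. f ` X \<subseteq> kSets k \<and>
           (\<forall>x\<in>X. \<forall>y\<in>X. s * d x y \<le> real (dI k (f x) (f y)) \<and>
                           real (dI k (f x) (f y)) \<le> (s / (1 - \<epsilon>)) * d x y)"
proof -
  have met: "\<And>x y. x\<in>X \<Longrightarrow> y\<in>X \<Longrightarrow> 0 \<le> d x y \<and> (d x y = 0 \<longleftrightarrow> x = y) \<and> d x y = d y x"
    and tri: "\<And>x y z. x\<in>X \<Longrightarrow> y\<in>X \<Longrightarrow> z\<in>X \<Longrightarrow> d x z \<le> d x y + d y z"
    using assms(4) unfolding is_metric_on_def by blast+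
  obtain ps where ps: "set ps = X" "distinct ps" using finite_distinct_list[OF assms(1)] by blast
  have lps: "length ps = n" using distinct_card[OF ps(2)] ps(1) assms(2) by simp
  define D where "D = diam X d"
  define dl where "dl = sep X d"
  let ?SD = "{d x y | x y. x \<in> X \<and> y \<in> X}"
  let ?SS = "{d x y | x y. x \<in> X \<and> y \<in> X \<and> x \<noteq> y}"
  have finSD: "finite ?SD"
  proof -
    have "?SD = (\<lambda>p. d (fst p) (snd p)) ` (X \<times> X)" by force
    then show ?thesis using assms(1) by simp
  qed
  have finSS: "finite ?SS" by (rule finite_subset[OF _ finSD]) blast
  have x0: "ps!0 \<in> X" "ps!1 \<in> X" "ps!0 \<noteq> ps!1"
    using lps assms(3) ps nth_eq_iff_index_eq[OF ps(2), of 0 1] by (auto intro!: nth_mem)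
  have neSS: "?SS \<noteq> {}" using x0 by blast
  have Dge: "d x y \<le> D" if "x\<in>X" "y\<in>X" for x y
    unfolding D_def diam_def using finSD that by (intro Max_ge) blast+
  have sepl: "dl \<le> d x y" if "x\<in>X" "y\<in>X" "x\<noteq>y" for x y
    unfolding dl_def sep_def using finSS that by (intro Min_le) blast+
  have dlpos: "0 < dl"
  proof -
    have "dl \<in> ?SS" unfolding dl_def sep_def using Min_in[OF finSS neSS] .
    then obtain x y where "x\<in>X" "y\<in>X" "x\<noteq>y" "dl = d x y" by blast
    then show ?thesis using met[of x y] by force
  qed
  have D0: "0 \<le> D" using Dge[OF x0(1) x0(1)] met[OF x0(1) x0(1)] by linarith
  define lam where "lam = 1 / (\<epsilon> * dl)"
  have lampos: "0 < lam" unfolding lam_def using dlpos assms(5) by simp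
  define V where "V = nat \<lceil>lam * D\<rceil>"
  define v where "v = (\<lambda>i x. nat \<lceil>lam * d x (ps!i)\<rceil>)"
  define Hf where "Hf = (\<lambda>x i. if i = 0 then 0 else if i \<le> n then i*V + v (i-1) x else k)"
  define f where "f = (\<lambda>x. SetG (ramp k (Hf x)))"
  have psX: "ps!i \<in> X" if "i < n" for i using that ps lps by auto
  have vle: "v i x \<le> V" if "x\<in>X" "i < n" for i x
  proof -
    have "lam * d x (ps!i) \<le> lam * D" using Dge[OF that(1) psX[OF that(2)]] lampos by simp
    then show ?thesis unfolding v_def V_def by (intro nat_mono ceiling_mono)
  qed
  have lamD: "lam * D = (D / dl) / \<epsilon>" unfolding lam_def by (simp add: field_simps)
  have realV: "real V \<le> lam * D + 1"
  proof -
    have "0 \<le> lam * D" using lampos D0 by simp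
    then have "real V = of_int \<lceil>lam * D\<rceil>" unfolding V_def by simp
    then show ?thesis using ceiling_correct[of "lam * D"] by linarith
  qed
  have bnd: "real k \<ge> (real n + 3/2) * (lam * D + D + 1)" using assms(7) lamD D_def dl_def by simp
  have "0 \<le> lam * D" using lampos D0 by simp
  then have "(real n + 1) * (lam * D + 1) \<le> (real n + 3/2) * (lam * D + D + 1)"
    using D0 by (intro mult_mono) auto
  moreover have "(real n + 1) * real V \<le> (real n + 1) * (lam * D + 1)"
    using realV by (intro mult_left_mono) auto
  moreover have "real ((n+1) * V) = (real n + 1) * real V" by (simp add: algebra_simps)
  ultimately have "real ((n+1) * V) \<le> real k" using bnd by linarith
  then have kV: "(n+1) * V \<le> k" by (simp only: of_nat_le_iff)
  have kpos: "0 < k"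
  proof -
    have "(real n + 3/2) * (lam * D + D + 1) \<ge> 1 * 1"
      using \<open>0 \<le> lam * D\<close> D0 by (intro mult_mono) auto
    then have "1 \<le> real k" using bnd by linarith
    then show ?thesis by simp
  qed
  have Hmono: "\<forall>i. Hf x i \<le> Hf x (Suc i)" if x: "x \<in> X" for x
  proof
    fix i
    show "Hf x i \<le> Hf x (Suc i)"
    proof (cases "i = 0")
      case True then show ?thesis unfolding Hf_def by simp
    next
      case False
      show ?thesis
      proof (cases "Suc i \<le> n")
        case True
        have "i - 1 < n" using True by linarith
        then have "v (i-1) x \<le> V" using vle[OF x, of "i-1"] by simp
        then have "i * V + v (i - 1) x \<le> Suc i * V + v i x" by simp
        then show ?thesis unfolding Hf_def using True False by simp
      next
        case F2: False
        show ?thesis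
        proof (cases "i \<le> n")
          case True
          then have "i = n" using F2 by simp
          moreover have "i - 1 < n" using \<open>i = n\<close> False by linarith
          moreover have "n * V + V \<le> k" using kV by (simp add: algebra_simps)
          ultimately have "i * V + v (i-1) x \<le> k" using vle[OF x, of "i-1"] by simp
          then show ?thesis unfolding Hf_def using True F2 False by simp
        next
          case False then show ?thesis unfolding Hf_def by simp
        qed
      qed
    qed
  qed
  have Hbound: "\<forall>i. Hf x i \<le> k" if x: "x \<in> X" for x
  proof
    fix i
    show "Hf x i \<le> k"
    proof (cases "i \<noteq> 0 \<and> i \<le> n")
      case True
      have "i - 1 < n" using True by linarith
      then have "v (i-1) x \<le> V" using vle[OF x, of "i-1"] by simp
      moreover have "i * V \<le> n * V" using True by simp
      moreover have "n * V + V \<le> k" using kV by (simp add: algebra_simps)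
      ultimately have "i * V + v (i-1) x \<le> k" by linarith
      then show ?thesis unfolding Hf_def using True by simp
    next
      case False then show ?thesis unfolding Hf_def by auto
    qed
  qed
  have Hev: "\<forall>i\<ge>Suc n. Hf x i = k" for x unfolding Hf_def by simp
  have H0: "Hf x 0 = 0" for x unfolding Hf_def by simp
  have val: "valid k (ramp k (Hf x))" if "x \<in> X" for x
    using valid_ramp[OF Hmono[OF that] Hbound[OF that] H0 Hev] .
  have fk: "f ` X \<subseteq> kSets k" unfolding f_def using SetG_kSets val by blast
  have cntf: "cnt (f x) t = ramp k (Hf x) t" if "x \<in> X" for x t
    unfolding f_def using cnt_SetG[OF val[OF that]] .
  have Hat: "cnt (f x) (i * Suc k) = Hf x i" if "x \<in> X" for x i
    using cntf[OF that] ramp_at[of k "Hf x" i] Hmono[OF that] by (simp add: min_absorb1)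
  have vdiff: "v i x \<le> v i y + nat \<lceil>lam * d x y\<rceil>" if "x\<in>X" "y\<in>X" "i<n" for x y i
  proof -
    let ?p = "ps!i"
    have p: "?p \<in> X" using psX that by blast
    have "lam * d x ?p \<le> lam * d x y + lam * d y ?p"
      using tri[OF that(1,2) p] lampos by (simp add: distrib_left[symmetric])
    then have "\<lceil>lam * d x ?p\<rceil> \<le> \<lceil>lam * d x y\<rceil> + \<lceil>lam * d y ?p\<rceil>"
      using ceiling_mono ceiling_add_le order_trans by blast
    moreover have "0 \<le> lam * d x y" "0 \<le> lam * d y ?p"
      using met[OF that(1,2)] met[OF that(2) p] lampos by auto
    then have "0 \<le> \<lceil>lam * d x y\<rceil>" "0 \<le> \<lceil>lam * d y ?p\<rceil>" by linarith+
    ultimately show ?thesis unfolding v_def by linarith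
  qed
  have Hdiff: "\<forall>i. Hf x i \<le> Hf y i + nat \<lceil>lam * d x y\<rceil>" if "x\<in>X" "y\<in>X" for x y
  proof
    fix i show "Hf x i \<le> Hf y i + nat \<lceil>lam * d x y\<rceil>"
      using vdiff[OF that, of "i-1"] unfolding Hf_def by auto
  qed
  have main: "real (dI k (f x) (f y)) = 2 * real (nat \<lceil>lam * d x y\<rceil>)"
    if x: "x\<in>X" and y: "y\<in>X" for x y
  proof -
    define P where "P = nat \<lceil>lam * d x y\<rceil>"
    have dsym: "d y x = d x y" using met[OF x y] by simp
    have b1: "\<forall>t. ramp k (Hf x) t \<le> ramp k (Hf y) t + P"
      unfolding P_def using ramp_cmp[OF Hdiff[OF x y]] by blast
    have b2: "\<forall>t. ramp k (Hf y) t \<le> ramp k (Hf x) t + P"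
      unfolding P_def using ramp_cmp[OF Hdiff[OF y x]] dsym by simp
    obtain m where m: "m \<le> 2*P" "walkI k m (f x) (f y)"
      using walk_between[OF kpos val[OF x] val[OF y] b1 b2] unfolding f_def by blast
    have W: "walkI k (dI k (f x) (f y)) (f x) (f y)"
      unfolding dI_def using m(2) by (rule LeastI)
    have "dI k (f x) (f y) \<le> m" unfolding dI_def by (rule Least_le) (rule m(2))
    then have Wle: "dI k (f x) (f y) \<le> 2*P" using m(1) by linarith
    obtain a where a: "a < n" "ps!a = x" using x ps lps by (metis in_set_conv_nth)
    obtain b where b: "b < n" "ps!b = y" using y ps lps by (metis in_set_conv_nth)
    have v1: "v b x = P" "v a y = P" unfolding v_def P_def using a b dsym by auto
    have v0: "v a x = 0" "v b y = 0" unfolding v_def using a b met[OF x x] met[OF y y] by auto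
    have h1: "Hf x (Suc b) = Suc b * V + P" "Hf y (Suc b) = Suc b * V"
      "Hf x (Suc a) = Suc a * V" "Hf y (Suc a) = Suc a * V + P"
      unfolding Hf_def using a b v1 v0 by auto
    have h: "cnt (f x) (Suc b * Suc k) = Suc b * V + P" "cnt (f y) (Suc b * Suc k) = Suc b * V"
      "cnt (f x) (Suc a * Suc k) = Suc a * V" "cnt (f y) (Suc a * Suc k) = Suc a * V + P"
      using Hat[OF x, of "Suc b"] Hat[OF y, of "Suc b"] Hat[OF x, of "Suc a"] Hat[OF y, of "Suc a"] h1
      by (simp only:)+
    have "2 * int P \<le> int (dI k (f x) (f y))"
      using walk_lower[OF W kpos, of "Suc a * Suc k" "Suc b * Suc k"] h by simp
    then show ?thesis using Wle unfolding P_def by linarith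
  qed
  show ?thesis
  proof (intro exI conjI)
    show "0 < 2 * lam" using lampos by simp
    show "f ` X \<subseteq> kSets k" by (rule fk)
    show "\<forall>x\<in>X. \<forall>y\<in>X. 2 * lam * d x y \<le> real (dI k (f x) (f y)) \<and>
       real (dI k (f x) (f y)) \<le> 2 * lam / (1 - \<epsilon>) * d x y"
    proof (intro ballI)
      fix x y assume x: "x \<in> X" and y: "y \<in> X"
      have d0: "0 \<le> d x y" using met[OF x y] by simp
      have Pc: "real (nat \<lceil>lam * d x y\<rceil>) = of_int \<lceil>lam * d x y\<rceil>"
        using d0 lampos by simp
      have c1: "lam * d x y \<le> of_int \<lceil>lam * d x y\<rceil>" by simp
      have c2: "of_int \<lceil>lam * d x y\<rceil> < lam * d x y + 1" using ceiling_correct[of "lam * d x y"] by linarith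
      show "2 * lam * d x y \<le> real (dI k (f x) (f y)) \<and>
        real (dI k (f x) (f y)) \<le> 2 * lam / (1 - \<epsilon>) * d x y"
      proof (cases "x = y")
        case True
        have "real (dI k (f x) (f y)) = 0" using main[OF x y] True met[OF x x] by simp
        then show ?thesis using True met[OF x x] by simp
      next
        case False
        have "dl \<le> d x y" using sepl[OF x y False] .
        then have "1 \<le> \<epsilon> * (lam * d x y)" unfolding lam_def using dlpos assms(5)
          by (simp add: field_simps)
        have "of_int \<lceil>lam * d x y\<rceil> * (1 - \<epsilon>) \<le> (lam * d x y + 1) * (1 - \<epsilon>)"
          using c2 assms(6) by (intro mult_right_mono) auto
        also have "\<dots> = lam * d x y + (1 - \<epsilon> - \<epsilon> * (lam * d x y))" by (simp add: algebra_simps)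
        also have "\<dots> \<le> lam * d x y" using \<open>1 \<le> \<epsilon> * (lam * d x y)\<close> assms(5) by linarith
        finally have key: "of_int \<lceil>lam * d x y\<rceil> * (1 - \<epsilon>) \<le> lam * d x y" .
        have "2 * of_int \<lceil>lam * d x y\<rceil> \<le> 2 * lam * d x y / (1 - \<epsilon>)"
          using key assms(6) by (simp add: pos_le_divide_eq)
        then show ?thesis using main[OF x y] Pc c1 by (simp add: mult.assoc)
      qed
    qed
  qed
qed

end
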